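(* Let $\mathcal{G}$ be a connected hypergraph with spectral radius $\rho$ and principal eigenvector $X=(x_v)$, let $k\ge2$, and let $e=\{u,v_1,v_2,\dots,v_{k-1}\}$ be a pendant edge of $\mathcal{G}$ with $\deg_{\mathcal{G}}(u)\geq 2$. Then $$x_{v_1}=x_{v_2}=\cdots=x_{v_{k-1}}=\frac{x_u}{(k-1)\rho-(k-2)}<x_u.$$
   Context: A hypergraph has a finite vertex set and distinct edges (subsets with at least two vertices); $\deg_{\mathcal{G}}(v)$ is the number of edges containing $v$; a pendant edge is an edge in which at most one vertex has degree greater than one. The adjacency matrix has $(\mathcal{A}_{\mathcal{G}})_{ij}=\sum_{e\ni i,j}\frac{1}{|e|-1}$ for $i\ne j$ and $0$ on the diagonal; $\rho$ is its spectral radius. For connected $\mathcal{G}$ the principal eigenvector is the unique positive eigenvector of $\mathcal{A}_{\mathcal{G}}$ for $\rho$ with unit Euclidean norm. *)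

theory Defs
  imports Complex_Main
begin

definition hypergraph :: "'a set \<Rightarrow> 'a set set \<Rightarrow> bool" where
  "hypergraph V E \<longleftrightarrow> finite V \<and> (\<forall>e\<in>E. e \<subseteq> V \<and> card e \<ge> 2)"

definition hdeg :: "'a set set \<Rightarrow> 'a \<Rightarrow> nat" where
  "hdeg E v = card {e\<in>E. v \<in> e}"

definition hconnected :: "'a set \<Rightarrow> 'a set set \<Rightarrow> bool" where
  "hconnected V E \<longleftrightarrow>
     (\<forall>x\<in>V. \<forall>y\<in>V. (x, y) \<in> {(a, b). \<exists>e\<in>E. a \<in> e \<and> b \<in> e}\<^sup>*)"

definition pendant_edge :: "'a set set \<Rightarrow> 'a set \<Rightarrow> bool" where
  "pendant_edge E e \<longleftrightarrow> e \<in> E \<and> card {w\<in>e. hdeg E w > 1} \<le> 1"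

definition hadj :: "'a set set \<Rightarrow> 'a \<Rightarrow> 'a \<Rightarrow> real" where
  "hadj E i j = (if i = j then 0
      else (\<Sum>e\<in>{e\<in>E. i \<in> e \<and> j \<in> e}. 1 / (real (card e) - 1)))"

definition heigenvalue :: "'a set \<Rightarrow> 'a set set \<Rightarrow> complex \<Rightarrow> bool" where
  "heigenvalue V E mu \<longleftrightarrow> (\<exists>x :: 'a \<Rightarrow> complex. (\<exists>v\<in>V. x v \<noteq> 0) \<and>
      (\<forall>i\<in>V. (\<Sum>j\<in>V. complex_of_real (hadj E i j) * x j) = mu * x i))"

definition hspectral_radius :: "'a set \<Rightarrow> 'a set set \<Rightarrow> real" where
  "hspectral_radius V E = Sup {cmod mu | mu. heigenvalue V E mu}"

definition principal_eigenvector :: "'a set \<Rightarrow> 'a set set \<Rightarrow> ('a \<Rightarrow> real) \<Rightarrow> bool" where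
  "principal_eigenvector V E x \<longleftrightarrow>
     (\<forall>v\<in>V. x v > 0) \<and>
     (\<forall>i\<in>V. (\<Sum>j\<in>V. hadj E i j * x j) = hspectral_radius V E * x i) \<and>
     (\<Sum>v\<in>V. (x v)\<^sup>2) = 1"

end

theory Submission
  imports Defs
begin

lemma card_le1_single:
  assumes "finite A" "a \<in> A" "card A \<le> 1" shows "A = {a}"
proof -
  have "\<forall>x\<in>A. \<forall>y\<in>A. x = y" using assms(3) card_le_Suc0_iff_eq[OF assms(1)] by simp
  thus ?thesis using assms(2) by blast
qed

lemma pend_edges:
  assumes hg: "hypergraph V E" and pe: "pendant_edge E e" and ue: "u \<in> e"
    and du: "hdeg E u \<ge> 2" and v: "v \<in> e" "v \<noteq> u"
  shows "{f\<in>E. v \<in> f} = {e}"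
proof -
  have fE: "finite E"
  proof -
    have "E \<subseteq> Pow V" using hg unfolding hypergraph_def by auto
    moreover have "finite (Pow V)" using hg unfolding hypergraph_def by simp
    ultimately show ?thesis by (rule finite_subset)
  qed
  have eE: "e \<in> E" using pe unfolding pendant_edge_def by auto
  have fe: "finite e" using hg eE unfolding hypergraph_def using finite_subset by blast
  let ?S = "{w\<in>e. hdeg E w > 1}"
  have "u \<in> ?S" using ue du by auto
  moreover have "card ?S \<le> 1" using pe unfolding pendant_edge_def by auto
  moreover have "finite ?S" using fe by auto
  ultimately have "?S = {u}" by (intro card_le1_single)
  hence "hdeg E v \<le> 1" using v by (metis (no_types, lifting) mem_Collect_eq not_less singletonD)
  hence c: "card {f\<in>E. v \<in> f} \<le> 1" unfolding hdeg_def .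
  have "e \<in> {f\<in>E. v \<in> f}" using eE v by auto
  moreover have "finite {f\<in>E. v \<in> f}" using fE by auto
  ultimately show ?thesis using c by (intro card_le1_single)
qed

theorem lemma3p7:
  fixes V :: "'a set" and E :: "'a set set" and x :: "'a \<Rightarrow> real"
    and e :: "'a set" and u :: 'a and k :: nat
  assumes "hypergraph V E" and "hconnected V E"
    and "principal_eigenvector V E x"
    and "k \<ge> 2" and "pendant_edge E e" and "u \<in> e" and "card e = k"
    and "hdeg E u \<ge> 2"
  shows "\<forall>v\<in>e - {u}.
           x v = x u / ((real k - 1) * hspectral_radius V E - (real k - 2)) \<and> x v < x u"
proof
  fix v assume v: "v \<in> e - {u}"
  define \<rho> where "\<rho> = hspectral_radius V E"
  note hg = assms(1) and pe = assms(5) and ue = assms(6) and du = assms(8)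
  have fV: "finite V" using hg unfolding hypergraph_def by auto
  have eE: "e \<in> E" using pe unfolding pendant_edge_def by auto
  have eV: "e \<subseteq> V" using hg eE unfolding hypergraph_def by auto
  have fe: "finite e" using fV eV finite_subset by auto
  have pos: "\<And>w. w \<in> V \<Longrightarrow> x w > 0" using assms(3) unfolding principal_eigenvector_def by auto
  have eig: "\<And>i. i \<in> V \<Longrightarrow> (\<Sum>j\<in>V. hadj E i j * x j) = \<rho> * x i"
    using assms(3) unfolding principal_eigenvector_def \<rho>_def by auto
  have k1: "real (card e) - 1 = real k - 1" using assms(7) by simp
  have pend: "\<And>w. w \<in> e - {u} \<Longrightarrow> {f\<in>E. w \<in> f} = {e}"
    using pend_edges[OF hg pe ue du] by auto
  have adj: "\<And>w j. w \<in> e - {u} \<Longrightarrow> j \<noteq> w \<Longrightarrow>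
      hadj E w j = (if j \<in> e then 1 / (real k - 1) else 0)
      \<and> hadj E j w = (if j \<in> e then 1 / (real k - 1) else 0)"
  proof -
    fix w j assume w: "w \<in> e - {u}" and jw: "j \<noteq> w"
    have s1: "{f\<in>E. w \<in> f \<and> j \<in> f} = (if j \<in> e then {e} else {})"
      using pend[OF w] by auto
    have s2: "{f\<in>E. j \<in> f \<and> w \<in> f} = (if j \<in> e then {e} else {})"
      using pend[OF w] by auto
    show "hadj E w j = (if j \<in> e then 1 / (real k - 1) else 0)
      \<and> hadj E j w = (if j \<in> e then 1 / (real k - 1) else 0)"
      unfolding hadj_def using jw s1 s2 k1 by auto
  qed
  define S where "S = (\<Sum>j\<in>e. x j)"
  have eqw: "x w * ((real k - 1) * \<rho> + 1) = S" if w: "w \<in> e - {u}" for w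
  proof -
    have "(\<Sum>j\<in>V. hadj E w j * x j) = (\<Sum>j\<in>V. if j \<in> e - {w} then x j / (real k - 1) else 0)"
    proof (rule sum.cong)
      fix j assume "j \<in> V"
      show "hadj E w j * x j = (if j \<in> e - {w} then x j / (real k - 1) else 0)"
      proof (cases "j = w")
        case True thus ?thesis by (simp add: hadj_def)
      next
        case False thus ?thesis using adj[OF w False] by auto
      qed
    qed simp
    also have "\<dots> = (\<Sum>j\<in>V \<inter> (e - {w}). x j / (real k - 1))"
      using sum.inter_restrict[OF fV] by metis
    also have "V \<inter> (e - {w}) = e - {w}" using eV by auto
    also have "(\<Sum>j\<in>e - {w}. x j / (real k - 1)) = (S - x w) / (real k - 1)"
      unfolding S_def using w fe by (simp add: sum_divide_distrib[symmetric] sum_diff1)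
    finally have "(S - x w) / (real k - 1) = \<rho> * x w" using eig w eV by auto
    moreover have "real k - 1 > 0" using assms(4) by auto
    ultimately show ?thesis by (simp add: field_simps)
  qed
  have Spos: "S > 0" unfolding S_def using ue fe eV pos
    by (intro sum_pos) auto
  have allc: "\<forall>w\<in>e - {u}. x w = x v"
  proof
    fix w assume w: "w \<in> e - {u}"
    have "((real k - 1) * \<rho> + 1) \<noteq> 0" using eqw[OF w] Spos by auto
    thus "x w = x v" using eqw[OF w] eqw[OF v] by auto
  qed
  have "S = x u + (\<Sum>j\<in>e - {u}. x j)" unfolding S_def using ue fe by (simp add: sum.remove)
  also have "(\<Sum>j\<in>e - {u}. x j) = (\<Sum>j\<in>e - {u}. x v)" using allc by simp
  also have "\<dots> = (real k - 1) * x v" using assms(7) assms(4) ue fe by (simp add: of_nat_diff)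
  finally have "x v * ((real k - 1) * \<rho> + 1) = x u + (real k - 1) * x v" using eqw[OF v] by simp
  hence D: "x v * ((real k - 1) * \<rho> - (real k - 2)) = x u" by (simp add: algebra_simps)
  have xv: "x v > 0" using v eV pos by auto
  have xu: "x u > 0" using ue eV pos by auto
  have "card {f\<in>E. u \<in> f} \<ge> 2" using du unfolding hdeg_def .
  then obtain f where f: "f \<in> E" "u \<in> f" "f \<noteq> e"
  proof -
    assume H: "\<And>f. f \<in> E \<Longrightarrow> u \<in> f \<Longrightarrow> f \<noteq> e \<Longrightarrow> thesis"
    show thesis
    proof (rule ccontr)
      assume "\<not> thesis"
      hence "{f\<in>E. u \<in> f} \<subseteq> {e}" using H by auto
      hence "card {f\<in>E. u \<in> f} \<le> card {e}" by (intro card_mono) auto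
      hence "card {f\<in>E. u \<in> f} \<le> 1" by simp
      thus False using \<open>card {f\<in>E. u \<in> f} \<ge> 2\<close> by simp
    qed
  qed
  have fV': "f \<subseteq> V" "card f \<ge> 2" using hg f unfolding hypergraph_def by auto
  obtain w where w: "w \<in> f" "w \<noteq> u"
  proof -
    assume H: "\<And>w. w \<in> f \<Longrightarrow> w \<noteq> u \<Longrightarrow> thesis"
    show thesis
    proof (rule ccontr)
      assume "\<not> thesis"
      hence "f \<subseteq> {u}" using H by auto
      hence "card f \<le> card {u}" by (intro card_mono) auto
      hence "card f \<le> 1" by simp
      thus False using fV' by simp
    qed
  qed
  have wne: "w \<notin> e"
  proof
    assume "w \<in> e"
    hence "{g\<in>E. w \<in> g} = {e}" using pend w by auto
    thus False using f w by auto
  qed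
  have wV: "w \<in> V" using w fV' by auto
  have auw: "hadj E u w > 0"
  proof -
  have fE: "finite E"
  proof -
    have "E \<subseteq> Pow V" using hg unfolding hypergraph_def by auto
    moreover have "finite (Pow V)" using hg unfolding hypergraph_def by simp
    ultimately show ?thesis by (rule finite_subset)
  qed
    have fin: "finite {g\<in>E. u \<in> g \<and> w \<in> g}" using fE by simp
    have nn: "\<And>g. g \<in> {g\<in>E. u \<in> g \<and> w \<in> g} \<Longrightarrow> 1 / (real (card g) - 1) > 0"
      using hg unfolding hypergraph_def by force
    have "f \<in> {g\<in>E. u \<in> g \<and> w \<in> g}" using f w by auto
    hence "(\<Sum>g\<in>{g\<in>E. u \<in> g \<and> w \<in> g}. 1 / (real (card g) - 1)) > 0"
      using fin nn by (metis (no_types, lifting) empty_iff sum_pos)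
    thus ?thesis unfolding hadj_def using w by auto
  qed
  have adjnn: "\<And>i j. hadj E i j \<ge> 0"
  proof -
    fix i j
    have "\<And>g. g \<in> E \<Longrightarrow> 1 / (real (card g) - 1) \<ge> 0"
    proof -
      fix g assume "g \<in> E"
      hence "card g \<ge> 2" using hg unfolding hypergraph_def by auto
      hence "real (card g) - 1 \<ge> 0" by simp
      thus "1 / (real (card g) - 1) \<ge> 0" by simp
    qed
    thus "hadj E i j \<ge> 0" unfolding hadj_def by (auto intro!: sum_nonneg)
  qed
  have sub: "insert w (e - {u}) \<subseteq> V" using wV eV by auto
  have "\<rho> * x u = (\<Sum>j\<in>V. hadj E u j * x j)" using eig ue eV by auto
  also have "\<dots> \<ge> (\<Sum>j\<in>insert w (e - {u}). hadj E u j * x j)"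
    by (rule sum_mono2[OF fV sub]) (metis DiffE adjnn pos less_imp_le mult_nonneg_nonneg)
  also have "(\<Sum>j\<in>insert w (e - {u}). hadj E u j * x j) = hadj E u w * x w + (\<Sum>j\<in>e - {u}. hadj E u j * x j)"
    using wne fe by simp
  also have "(\<Sum>j\<in>e - {u}. hadj E u j * x j) = (\<Sum>j\<in>e - {u}. x v / (real k - 1))"
    by (rule sum.cong) (use adj ue allc in auto)
  also have "\<dots> = x v"
    using assms(7) ue fe assms(4) by simp
  finally have atu: "\<rho> * x u \<ge> hadj E u w * x w + x v" .
  have "hadj E u w * x w > 0" using auw pos wV by simp
  hence atu': "\<rho> * x u > x v" using atu by simp
  have rho1: "\<rho> > 1"
  proof (rule ccontr)
    assume "\<not> \<rho> > 1"
    hence r: "\<rho> \<le> 1" by simp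
    have "(real k - 1) * \<rho> \<le> (real k - 1)" using r assms(4) by (simp add: mult_left_le)
    hence "(real k - 1) * \<rho> - (real k - 2) \<le> 1" by simp
    hence "x u \<le> x v" using D xv by (metis mult_left_le mult_1_right less_imp_le)
    moreover have "\<rho> * x u \<le> x u" using r xu by (simp add: mult_left_le_one_le less_imp_le)
    ultimately show False using atu' by simp
  qed
  define Dn where "Dn = (real k - 1) * \<rho> - (real k - 2)"
  have "Dn - 1 = (real k - 1) * (\<rho> - 1)" unfolding Dn_def by (simp add: algebra_simps)
  moreover have "real k - 1 > 0" using assms(4) by simp
  ultimately have Dg: "Dn > 1" using rho1 by (smt (verit) mult_pos_pos)
  have "x v * Dn = x u" using D unfolding Dn_def .
  hence "x v = x u / Dn" using Dg by (simp add: field_simps)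
  moreover have "x v < x u" using \<open>x v * Dn = x u\<close> Dg xv
    by (metis mult_less_cancel_left_pos mult_1_right)
  ultimately show "x v = x u / ((real k - 1) * hspectral_radius V E - (real k - 2)) \<and> x v < x u"
    unfolding Dn_def \<rho>_def by simp
qed

end
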